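(* Let $B$ be a finitely realizable hypergroup and $A$ a normal sub-hypergroup of $B$. Then $A$ and the quotient hypergroup $B/A$ are finitely realizable.
   Context: A hypergroup is a nonempty set $H$ with $*:H\times H\to P^*(H)$ (nonempty subsets), extended to subsets by unions, which is associative, has a unique identity $e$, unique inverses $h^{-1}$ with $e\in(h^{-1}*h)\cap(h*h^{-1})$, and is reversible ($c\in a*b\Rightarrow a\in c*b^{-1},\ b\in a^{-1}*c$). A sub-hypergroup is a subset which is a hypergroup under the restricted hyperoperation; it is normal, $A$ say, if $bA=Ab$ for all $b\in B$ (with $bA=\{b\}*A$). The quotient $B/A$ is the hypergroup on the cosets $\{bA:b\in B\}$ with $(xA)(yA)=\{zA: z\in xA*yA\}$. For a nonempty set $X$: $1_X$ is the diagonal, $p^*=\{(a,b):(b,a)\in p\}$, $xp=\{y:(x,y)\in p\}$. An association scheme on $X$ is a partition $S$ of $X\times X$ with $1_X\in S$, closed under $p\mapsto p^*$, such that for all $p,q,r\in S$ there is a cardinal $a_{pq}^r$ with $|yp\cap zq^*|=a_{pq}^r$ for all $y\in X$, $z\in yr$. $\mathbf{H}(S)$ is the hypergroup on $S$ with $p*q=\{r: a_{pq}^r\ge1\}$, identity $1_X$, inverse $p^*$. A hypergroup is finitely realizable if it is isomorphic to $\mathbf{H}(S)$ for an association scheme $S$ on a finite set. *)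

theory Defs
  imports Main
begin

text \<open>A hypergroup is given by a carrier set H and a hyperoperation hop, which is only
  relevant on H. The hyperoperation is extended to subsets by unions.\<close>

definition set_hop :: "('a \<Rightarrow> 'a \<Rightarrow> 'a set) \<Rightarrow> 'a set \<Rightarrow> 'a set \<Rightarrow> 'a set" where
  "set_hop hop X Y = (\<Union>x\<in>X. \<Union>y\<in>Y. hop x y)"

definition is_hg_identity :: "'a set \<Rightarrow> ('a \<Rightarrow> 'a \<Rightarrow> 'a set) \<Rightarrow> 'a \<Rightarrow> bool" where
  "is_hg_identity H hop e \<longleftrightarrow> e \<in> H \<and> (\<forall>a\<in>H. hop e a = {a} \<and> hop a e = {a})"

definition hg_unit :: "'a set \<Rightarrow> ('a \<Rightarrow> 'a \<Rightarrow> 'a set) \<Rightarrow> 'a" where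
  "hg_unit H hop = (THE e. is_hg_identity H hop e)"

definition is_hg_inverse :: "'a set \<Rightarrow> ('a \<Rightarrow> 'a \<Rightarrow> 'a set) \<Rightarrow> 'a \<Rightarrow> 'a \<Rightarrow> bool" where
  "is_hg_inverse H hop h h' \<longleftrightarrow> h' \<in> H \<and> hg_unit H hop \<in> hop h' h \<inter> hop h h'"

definition hg_inv :: "'a set \<Rightarrow> ('a \<Rightarrow> 'a \<Rightarrow> 'a set) \<Rightarrow> 'a \<Rightarrow> 'a" where
  "hg_inv H hop h = (THE h'. is_hg_inverse H hop h h')"

definition hypergroup :: "'a set \<Rightarrow> ('a \<Rightarrow> 'a \<Rightarrow> 'a set) \<Rightarrow> bool" where
  "hypergroup H hop \<longleftrightarrow>
     H \<noteq> {} \<and>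
     (\<forall>a\<in>H. \<forall>b\<in>H. hop a b \<noteq> {} \<and> hop a b \<subseteq> H) \<and>
     (\<forall>a\<in>H. \<forall>b\<in>H. \<forall>c\<in>H. set_hop hop (hop a b) {c} = set_hop hop {a} (hop b c)) \<and>
     (\<exists>!e. is_hg_identity H hop e) \<and>
     (\<forall>h\<in>H. \<exists>!h'. is_hg_inverse H hop h h') \<and>
     (\<forall>a\<in>H. \<forall>b\<in>H. \<forall>c\<in>H. c \<in> hop a b \<longrightarrow>
         a \<in> hop c (hg_inv H hop b) \<and> b \<in> hop (hg_inv H hop a) c)"

definition sub_hypergroup :: "'a set \<Rightarrow> 'a set \<Rightarrow> ('a \<Rightarrow> 'a \<Rightarrow> 'a set) \<Rightarrow> bool" where
  "sub_hypergroup A B hop \<longleftrightarrow> A \<subseteq> B \<and> hypergroup A hop"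

definition normal_sub_hypergroup :: "'a set \<Rightarrow> 'a set \<Rightarrow> ('a \<Rightarrow> 'a \<Rightarrow> 'a set) \<Rightarrow> bool" where
  "normal_sub_hypergroup A B hop \<longleftrightarrow> sub_hypergroup A B hop \<and>
     (\<forall>b\<in>B. set_hop hop {b} A = set_hop hop A {b})"

definition hcoset :: "('a \<Rightarrow> 'a \<Rightarrow> 'a set) \<Rightarrow> 'a \<Rightarrow> 'a set \<Rightarrow> 'a set" where
  "hcoset hop b A = set_hop hop {b} A"

definition quot_carrier :: "'a set \<Rightarrow> 'a set \<Rightarrow> ('a \<Rightarrow> 'a \<Rightarrow> 'a set) \<Rightarrow> 'a set set" where
  "quot_carrier B A hop = (\<lambda>b. hcoset hop b A) ` B"

definition quot_hop :: "'a set \<Rightarrow> ('a \<Rightarrow> 'a \<Rightarrow> 'a set) \<Rightarrow> 'a set \<Rightarrow> 'a set \<Rightarrow> 'a set set" where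
  "quot_hop A hop C D = {hcoset hop z A | z. z \<in> set_hop hop C D}"

definition hg_iso :: "'a set \<Rightarrow> ('a \<Rightarrow> 'a \<Rightarrow> 'a set) \<Rightarrow> 'b set \<Rightarrow> ('b \<Rightarrow> 'b \<Rightarrow> 'b set) \<Rightarrow> bool" where
  "hg_iso H hop K kop \<longleftrightarrow> (\<exists>f. bij_betw f H K \<and> (\<forall>a\<in>H. \<forall>b\<in>H. f ` hop a b = kop (f a) (f b)))"

definition out_nbhd :: "'x \<Rightarrow> ('x \<times> 'x) set \<Rightarrow> 'x set" where
  "out_nbhd x p = {y. (x, y) \<in> p}"

definition assoc_scheme :: "'x set \<Rightarrow> ('x \<times> 'x) set set \<Rightarrow> bool" where
  "assoc_scheme X S \<longleftrightarrow>
     X \<noteq> {} \<and>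
     (\<forall>p\<in>S. p \<noteq> {}) \<and> \<Union>S = X \<times> X \<and> (\<forall>p\<in>S. \<forall>q\<in>S. p \<noteq> q \<longrightarrow> p \<inter> q = {}) \<and>
     Id_on X \<in> S \<and>
     (\<forall>p\<in>S. p\<inverse> \<in> S) \<and>
     (\<forall>p\<in>S. \<forall>q\<in>S. \<forall>r\<in>S. \<exists>c. \<forall>y\<in>X. \<forall>z\<in>out_nbhd y r.
         card (out_nbhd y p \<inter> out_nbhd z (q\<inverse>)) = c)"

text \<open>Intersection number a_pq^r (for a finite scheme; the value is independent of the
  chosen pair in r by the scheme axiom).\<close>
definition isect_number :: "('x \<times> 'x) set \<Rightarrow> ('x \<times> 'x) set \<Rightarrow> ('x \<times> 'x) set \<Rightarrow> nat" where
  "isect_number p q r = (let (y, z) = (SOME yz. yz \<in> r) in card (out_nbhd y p \<inter> out_nbhd z (q\<inverse>)))"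

definition scheme_hop :: "('x \<times> 'x) set set \<Rightarrow> ('x \<times> 'x) set \<Rightarrow> ('x \<times> 'x) set \<Rightarrow> ('x \<times> 'x) set set" where
  "scheme_hop S p q = {r\<in>S. isect_number p q r \<ge> 1}"

text \<open>Finitely realizable: isomorphic to H(S) for an association scheme S on a finite set.
  Every finite set is in bijection with a subset of nat, so we take X :: nat set.\<close>
definition finitely_realizable :: "'a set \<Rightarrow> ('a \<Rightarrow> 'a \<Rightarrow> 'a set) \<Rightarrow> bool" where
  "finitely_realizable H hop \<longleftrightarrow>
     (\<exists>(X::nat set) S. finite X \<and> assoc_scheme X S \<and> hg_iso H hop S (scheme_hop S))"

end

theory Submission
  imports Defs
begin


locale fscheme =
  fixes X :: "'x set" and S :: "('x \<times> 'x) set set"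
  assumes sch: "assoc_scheme X S" and finX: "finite X"
begin

lemma sub: "p \<in> S \<Longrightarrow> p \<subseteq> X \<times> X"
  using sch unfolding assoc_scheme_def by blast

lemma nonemp: "p \<in> S \<Longrightarrow> p \<noteq> {}"
  using sch unfolding assoc_scheme_def by blast

lemma disj: "p \<in> S \<Longrightarrow> q \<in> S \<Longrightarrow> x \<in> p \<Longrightarrow> x \<in> q \<Longrightarrow> p = q"
  using sch unfolding assoc_scheme_def by blast

lemma cover: "a \<in> X \<Longrightarrow> b \<in> X \<Longrightarrow> \<exists>p\<in>S. (a, b) \<in> p"
proof -
  assume "a \<in> X" "b \<in> X"
  hence "(a,b) \<in> \<Union>S" using sch unfolding assoc_scheme_def by blast
  thus ?thesis by blast
qed

lemma IdS: "Id_on X \<in> S" using sch unfolding assoc_scheme_def by blast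
lemma convS: "p \<in> S \<Longrightarrow> p\<inverse> \<in> S" using sch unfolding assoc_scheme_def by blast
lemma Xne: "X \<noteq> {}" using sch unfolding assoc_scheme_def by blast

lemma finS: "finite S"
proof -
  have "S \<subseteq> Pow (X \<times> X)" using sub by blast
  thus ?thesis using finX by (meson finite_Pow_iff finite_SigmaI finite_subset)
qed

lemma out_sub: "p \<in> S \<Longrightarrow> out_nbhd y p \<subseteq> X"
  using sub unfolding out_nbhd_def by blast

lemma const:
  assumes "p \<in> S" "q \<in> S" "r \<in> S" "(y,z) \<in> r" "(y',z') \<in> r"
  shows "card (out_nbhd y p \<inter> out_nbhd z (q\<inverse>)) = card (out_nbhd y' p \<inter> out_nbhd z' (q\<inverse>))"
proof -
  obtain c where c: "\<forall>y\<in>X. \<forall>z\<in>out_nbhd y r. card (out_nbhd y p \<inter> out_nbhd z (q\<inverse>)) = c"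
    using sch assms(1-3) unfolding assoc_scheme_def by meson
  have "y \<in> X" "y' \<in> X" using sub[OF assms(3)] assms(4,5) by auto
  moreover have "z \<in> out_nbhd y r" "z' \<in> out_nbhd y' r" using assms(4,5) unfolding out_nbhd_def by auto
  ultimately show ?thesis using c by metis
qed

lemma isect_ex: "r \<noteq> {} \<Longrightarrow> \<exists>y z. (y,z) \<in> r \<and> isect_number p q r = card (out_nbhd y p \<inter> out_nbhd z (q\<inverse>))"
proof -
  assume "r \<noteq> {}"
  hence "(SOME yz. yz \<in> r) \<in> r" by (meson ex_in_conv someI_ex)
  moreover obtain y z where "(SOME yz. yz \<in> r) = (y,z)" by fastforce
  ultimately show ?thesis unfolding isect_number_def Let_def by auto
qed

lemma hop_char:
  assumes "p \<in> S" "q \<in> S" "r \<in> S" "(a,c) \<in> r"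
  shows "r \<in> scheme_hop S p q \<longleftrightarrow> (\<exists>b. (a,b) \<in> p \<and> (b,c) \<in> q)"
proof -
  obtain y z where yz: "(y,z) \<in> r" "isect_number p q r = card (out_nbhd y p \<inter> out_nbhd z (q\<inverse>))"
    using isect_ex nonemp[OF assms(3)] by blast
  have eq: "isect_number p q r = card (out_nbhd a p \<inter> out_nbhd c (q\<inverse>))"
    using yz const[OF assms(1-3) yz(1) assms(4)] by simp
  have fin: "finite (out_nbhd a p \<inter> out_nbhd c (q\<inverse>))"
    using out_sub[OF assms(1)] finX by (meson finite_Int finite_subset)
  have set: "out_nbhd a p \<inter> out_nbhd c (q\<inverse>) = {b. (a,b) \<in> p \<and> (b,c) \<in> q}"
    unfolding out_nbhd_def by auto
  have "r \<in> scheme_hop S p q \<longleftrightarrow> 1 \<le> card (out_nbhd a p \<inter> out_nbhd c (q\<inverse>))"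
    unfolding scheme_hop_def using assms(3) eq by auto
  also have "\<dots> \<longleftrightarrow> out_nbhd a p \<inter> out_nbhd c (q\<inverse>) \<noteq> {}"
    using fin by (metis One_nat_def Suc_le_eq card_gt_0_iff)
  finally show ?thesis using set by auto
qed

lemma hop_sub: "scheme_hop S p q \<subseteq> S" unfolding scheme_hop_def by auto

lemma outdeg:
  assumes "p \<in> S" "x \<in> X" shows "\<exists>y. (x,y) \<in> p"
proof -
  obtain a b where ab: "(a,b) \<in> p" using nonemp[OF assms(1)] by auto
  have a: "a \<in> X" using sub[OF assms(1)] ab by auto
  have "card (out_nbhd x p \<inter> out_nbhd x ((p\<inverse>)\<inverse>)) = card (out_nbhd a p \<inter> out_nbhd a ((p\<inverse>)\<inverse>))"
    using const[OF assms(1) convS[OF assms(1)] IdS, of x x a a] assms(2) a by auto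
  hence c: "card (out_nbhd x p) = card (out_nbhd a p)" by simp
  have "out_nbhd a p \<noteq> {}" using ab unfolding out_nbhd_def by auto
  hence "card (out_nbhd a p) > 0" using out_sub[OF assms(1)] finX
    by (meson card_gt_0_iff finite_subset)
  hence "out_nbhd x p \<noteq> {}" using c by auto
  thus ?thesis unfolding out_nbhd_def by auto
qed

lemma unionU:
  assumes "P \<subseteq> S" "Q \<subseteq> S"
  shows "\<Union>(set_hop (scheme_hop S) P Q) = \<Union>P O \<Union>Q"
proof
  show "\<Union>(set_hop (scheme_hop S) P Q) \<subseteq> \<Union>P O \<Union>Q"
  proof
    fix x assume "x \<in> \<Union>(set_hop (scheme_hop S) P Q)"
    then obtain p q r where pq: "p \<in> P" "q \<in> Q" "r \<in> scheme_hop S p q" "x \<in> r"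
      unfolding set_hop_def by blast
    obtain a c where x: "x = (a,c)" by fastforce
    have "r \<in> S" using pq(3) hop_sub by auto
    then obtain b where "(a,b) \<in> p" "(b,c) \<in> q"
      using hop_char[of p q r a c] pq assms x by auto
    thus "x \<in> \<Union>P O \<Union>Q" using pq x by blast
  qed
next
  show "\<Union>P O \<Union>Q \<subseteq> \<Union>(set_hop (scheme_hop S) P Q)"
  proof
    fix x assume "x \<in> \<Union>P O \<Union>Q"
    then obtain a b c p q where x: "x = (a,c)" "(a,b) \<in> p" "(b,c) \<in> q" "p \<in> P" "q \<in> Q" by blast
    have "a \<in> X" "c \<in> X" using sub assms x by blast+
    then obtain r where r: "r \<in> S" "(a,c) \<in> r" using cover by blast
    have "r \<in> scheme_hop S p q" using hop_char[of p q r a c] r x assms by blast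
    thus "x \<in> \<Union>(set_hop (scheme_hop S) P Q)" unfolding set_hop_def using x r by blast
  qed
qed

lemma Uinj: "C \<subseteq> S \<Longrightarrow> D \<subseteq> S \<Longrightarrow> \<Union>C = \<Union>D \<Longrightarrow> C = D"
proof -
  assume a: "C \<subseteq> S" "D \<subseteq> S" "\<Union>C = \<Union>D"
  have *: "C' \<subseteq> D'" if h: "C' \<subseteq> S" "D' \<subseteq> S" "\<Union>C' = \<Union>D'" for C' D'
  proof
    fix p assume p: "p \<in> C'"
    have "p \<noteq> {}" using nonemp p h(1) by blast
    then obtain x where x: "x \<in> p" by blast
    hence "x \<in> \<Union>D'" using p h(3) by blast
    then obtain q where "q \<in> D'" "x \<in> q" by blast
    thus "p \<in> D'" using disj[of p q x] p x h by blast
  qed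
  show ?thesis using *[of C D] *[of D C] a by auto
qed

lemma Usat: "P \<subseteq> S \<Longrightarrow> p \<in> S \<Longrightarrow> x \<in> p \<Longrightarrow> x \<in> \<Union>P \<Longrightarrow> p \<subseteq> \<Union>P"
  using disj by blast

lemma count_const:
  assumes P: "P \<subseteq> S" and Q: "Q \<subseteq> S" and r: "r \<in> S" "(y,z) \<in> r" "(y',z') \<in> r"
  shows "card {w. (y,w) \<in> \<Union>P \<and> (w,z) \<in> \<Union>Q} = card {w. (y',w) \<in> \<Union>P \<and> (w,z') \<in> \<Union>Q}"
proof -
  define F where "F = (\<lambda>y z (pq :: ('x\<times>'x) set \<times> ('x\<times>'x) set). out_nbhd y (fst pq) \<inter> out_nbhd z ((snd pq)\<inverse>))"
  have finI: "finite (P \<times> Q)" using P Q finS by (meson finite_SigmaI finite_subset)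
  have key: "card {w. (y,w) \<in> \<Union>P \<and> (w,z) \<in> \<Union>Q} = (\<Sum>pq\<in>P\<times>Q. card (F y z pq))" for y z
  proof -
    have eq: "{w. (y,w) \<in> \<Union>P \<and> (w,z) \<in> \<Union>Q} = \<Union>(F y z ` (P \<times> Q))"
      unfolding F_def out_nbhd_def by auto
    have "card (\<Union>(F y z ` (P \<times> Q))) = (\<Sum>pq\<in>P\<times>Q. card (F y z pq))"
    proof (rule card_UN_disjoint[OF finI])
      show "\<forall>i\<in>P \<times> Q. finite (F y z i)"
      proof
        fix i assume "i \<in> P \<times> Q"
        hence "fst i \<in> S" using P by auto
        hence "out_nbhd y (fst i) \<subseteq> X" by (rule out_sub)
        thus "finite (F y z i)" unfolding F_def using finX by (meson finite_Int finite_subset)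
      qed
      show "\<forall>i\<in>P \<times> Q. \<forall>j\<in>P \<times> Q. i \<noteq> j \<longrightarrow> F y z i \<inter> F y z j = {}"
      proof (intro ballI impI)
        fix i j assume ij: "i \<in> P \<times> Q" "j \<in> P \<times> Q" "i \<noteq> j"
        show "F y z i \<inter> F y z j = {}"
        proof (rule ccontr)
          assume "F y z i \<inter> F y z j \<noteq> {}"
          then obtain w where w: "(y,w) \<in> fst i" "(y,w) \<in> fst j" "(w,z) \<in> snd i" "(w,z) \<in> snd j"
            unfolding F_def out_nbhd_def by auto
          have "fst i \<in> S" "fst j \<in> S" "snd i \<in> S" "snd j \<in> S" using ij P Q by auto
          hence "fst i = fst j" "snd i = snd j" using disj w by blast+
          thus False using ij(3) by (simp add: prod_eq_iff)
        qed
      qed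
    qed
    thus ?thesis using eq by simp
  qed
  have "(\<Sum>pq\<in>P\<times>Q. card (F y z pq)) = (\<Sum>pq\<in>P\<times>Q. card (F y' z' pq))"
  proof (rule sum.cong)
    fix pq assume "pq \<in> P \<times> Q"
    thus "card (F y z pq) = card (F y' z' pq)" unfolding F_def
      using const[OF _ _ r] P Q by (auto simp: mem_Times_iff)
  qed simp
  thus ?thesis using key by simp
qed


lemma ident:
  assumes e: "e \<in> S" "scheme_hop S e e = {e}"
  shows "e = Id_on X"
proof -
  have tr: "trans e"
  proof (rule transI)
    fix a b c assume ab: "(a,b) \<in> e" "(b,c) \<in> e"
    have "a \<in> X" "c \<in> X" using sub[OF e(1)] ab by auto
    then obtain r where r: "r \<in> S" "(a,c) \<in> r" using cover by blast
    have "r \<in> scheme_hop S e e" using hop_char[OF e(1) e(1) r] ab by blast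
    hence "r = e" using e(2) by auto
    thus "(a,c) \<in> e" using r by simp
  qed
  have "\<exists>x. (x,x) \<in> e"
  proof (rule ccontr)
    assume no: "\<not> (\<exists>x. (x,x) \<in> e)"
    have "acyclic e" unfolding acyclic_def using trancl_id[OF tr] no by simp
    moreover have "finite e" using sub[OF e(1)] finX by (meson finite_SigmaI finite_subset)
    ultimately have wf: "wf (e\<inverse>)" using finite_acyclic_wf_converse by blast
    obtain x0 where "x0 \<in> X" using Xne by blast
    then obtain z where z: "z \<in> X" "\<forall>y. (y,z) \<in> e\<inverse> \<longrightarrow> y \<notin> X"
      using wf unfolding wf_eq_minimal by blast
    obtain y where y: "(z,y) \<in> e" using outdeg[OF e(1) z(1)] by blast
    have "y \<in> X" using sub[OF e(1)] y by auto
    thus False using z y by auto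
  qed
  then obtain x where x: "(x,x) \<in> e" by blast
  have "x \<in> X" using sub[OF e(1)] x by auto
  hence "(x,x) \<in> Id_on X" by auto
  thus ?thesis using disj[OF e(1) IdS x] by simp
qed

lemma invS:
  assumes "p \<in> S" "q \<in> S" "Id_on X \<in> scheme_hop S q p"
  shows "q = p\<inverse>"
proof -
  obtain x where x: "x \<in> X" using Xne by blast
  hence "(x,x) \<in> Id_on X" by auto
  then obtain b where b: "(x,b) \<in> q" "(b,x) \<in> p" using hop_char[OF assms(2,1) IdS] assms(3) by blast
  thus ?thesis using disj[OF assms(2) convS[OF assms(1)], of "(x,b)"] by auto
qed

lemma ex_const:
  assumes "\<And>a b a' b'. (a,b) \<in> r \<Longrightarrow> (a',b') \<in> r \<Longrightarrow> g a b = (g a' b' :: nat)"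
  shows "\<exists>c. \<forall>y\<in>Y'. \<forall>z\<in>out_nbhd y r. g y z = c"
proof (cases "r = {}")
  case True thus ?thesis unfolding out_nbhd_def by auto
next
  case False
  then obtain a b where "(a,b) \<in> r" by auto
  thus ?thesis using assms unfolding out_nbhd_def by blast
qed

context
  fixes T assumes TS: "T \<subseteq> S" and TId: "Id_on X \<in> T" and Tconv: "\<forall>p\<in>T. p\<inverse> \<in> T"
    and Tcl: "\<forall>p\<in>T. \<forall>q\<in>T. scheme_hop S p q \<subseteq> T"
begin

lemma Rsub: "\<Union>T \<subseteq> X \<times> X" using TS sub by blast
lemma Rrefl: "x \<in> X \<Longrightarrow> (x,x) \<in> \<Union>T" using TId by auto
lemma Rsym: "(a,b) \<in> \<Union>T \<Longrightarrow> (b,a) \<in> \<Union>T" using Tconv by blast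
lemma Rtrans: 
  assumes "(a,b) \<in> \<Union>T" "(b,c) \<in> \<Union>T" shows "(a,c) \<in> \<Union>T"
proof -
  obtain p q where pq: "p \<in> T" "q \<in> T" "(a,b) \<in> p" "(b,c) \<in> q" using assms by blast
  have "a \<in> X" "c \<in> X" using Rsub assms by auto
  then obtain r where r: "r \<in> S" "(a,c) \<in> r" using cover by blast
  have "r \<in> scheme_hop S p q" using hop_char[of p q r a c] r pq TS by blast
  hence "r \<in> T" using Tcl pq by blast
  thus ?thesis using r by blast
qed

lemma Yclosed: "(x0,y) \<in> \<Union>T \<Longrightarrow> p \<in> T \<Longrightarrow> (y,w) \<in> p \<Longrightarrow> (x0,w) \<in> \<Union>T"
  using Rtrans by blast

lemma sub_scheme:
  assumes x0: "x0 \<in> X"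
  shows "assoc_scheme (out_nbhd x0 (\<Union>T)) ((\<lambda>p. p \<inter> out_nbhd x0 (\<Union>T) \<times> out_nbhd x0 (\<Union>T)) ` T)"
proof -
  define Y where "Y = out_nbhd x0 (\<Union>T)"
  define SY where "SY = (\<lambda>p. p \<inter> Y \<times> Y) ` T"
  have Ysub: "Y \<subseteq> X" using Rsub unfolding Y_def out_nbhd_def by blast
  have x0Y: "x0 \<in> Y" using Rrefl[OF x0] unfolding Y_def out_nbhd_def by auto
  have ne: "p \<inter> Y \<times> Y \<noteq> {}" if p: "p \<in> T" for p
  proof -
    obtain y where y: "(x0,y) \<in> p" using outdeg[OF _ x0, of p] p TS by blast
    hence "y \<in> Y" using p unfolding Y_def out_nbhd_def by blast
    thus ?thesis using x0Y y by blast
  qed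
  have 1: "Y \<noteq> {}" using x0Y by blast
  have 2: "\<forall>p\<in>SY. p \<noteq> {}" using ne unfolding SY_def by blast
  have 3: "\<Union>SY = Y \<times> Y"
  proof
    show "\<Union>SY \<subseteq> Y \<times> Y" unfolding SY_def by blast
    show "Y \<times> Y \<subseteq> \<Union>SY"
    proof
      fix x assume "x \<in> Y \<times> Y"
      then obtain a b where ab: "x = (a,b)" "(x0,a) \<in> \<Union>T" "(x0,b) \<in> \<Union>T"
        unfolding Y_def out_nbhd_def by auto
      have "(a,b) \<in> \<Union>T" using Rtrans[OF Rsym[OF ab(2)] ab(3)] .
      then obtain p where "p \<in> T" "(a,b) \<in> p" by blast
      thus "x \<in> \<Union>SY" using ab \<open>x \<in> Y \<times> Y\<close> unfolding SY_def by blast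
    qed
  qed
  have 4: "\<forall>p\<in>SY. \<forall>q\<in>SY. p \<noteq> q \<longrightarrow> p \<inter> q = {}"
  proof (intro ballI impI)
    fix p' q' assume "p' \<in> SY" "q' \<in> SY" "p' \<noteq> q'"
    then obtain p q where pq: "p \<in> T" "q \<in> T" "p' = p \<inter> Y \<times> Y" "q' = q \<inter> Y \<times> Y" "p \<noteq> q"
      unfolding SY_def by blast
    have "p \<inter> q = {}"
    proof (rule ccontr)
      assume "p \<inter> q \<noteq> {}"
      then obtain x where "x \<in> p" "x \<in> q" by blast
      thus False using disj[of p q x] pq TS by blast
    qed
    thus "p' \<inter> q' = {}" using pq by blast
  qed
  have 5: "Id_on Y \<in> SY"
  proof -
    have "Id_on Y = Id_on X \<inter> Y \<times> Y" using Ysub by auto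
    thus ?thesis unfolding SY_def using TId by blast
  qed
  have 6: "\<forall>p\<in>SY. p\<inverse> \<in> SY"
  proof
    fix p' assume "p' \<in> SY"
    then obtain p where p: "p \<in> T" "p' = p \<inter> Y \<times> Y" unfolding SY_def by blast
    hence "p'\<inverse> = p\<inverse> \<inter> Y \<times> Y" by auto
    thus "p'\<inverse> \<in> SY" unfolding SY_def using Tconv p by blast
  qed
  have 7: "\<forall>p\<in>SY. \<forall>q\<in>SY. \<forall>r\<in>SY. \<exists>c. \<forall>y\<in>Y. \<forall>z\<in>out_nbhd y r.
         card (out_nbhd y p \<inter> out_nbhd z (q\<inverse>)) = c"
  proof (intro ballI)
    fix p' q' r' assume "p' \<in> SY" "q' \<in> SY" "r' \<in> SY"
    then obtain p q r where pqr: "p \<in> T" "q \<in> T" "r \<in> T" "p' = p \<inter> Y \<times> Y" "q' = q \<inter> Y \<times> Y"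
       "r' = r \<inter> Y \<times> Y" unfolding SY_def by blast
    have eq: "out_nbhd y p' \<inter> out_nbhd z (q'\<inverse>) = out_nbhd y p \<inter> out_nbhd z (q\<inverse>)"
      if "(y,z) \<in> r'" for y z
    proof -
      have yz: "y \<in> Y" "z \<in> Y" using that pqr by auto
      hence yT: "(x0,y) \<in> \<Union>T" unfolding Y_def out_nbhd_def by simp
      have wY: "w \<in> Y" if "(y,w) \<in> p" for w
        using Yclosed[OF yT pqr(1) that] unfolding Y_def out_nbhd_def by simp
      show ?thesis using yz wY unfolding out_nbhd_def pqr by auto
    qed
    show "\<exists>c. \<forall>y\<in>Y. \<forall>z\<in>out_nbhd y r'. card (out_nbhd y p' \<inter> out_nbhd z (q'\<inverse>)) = c"
    proof (rule ex_const)
      fix a b a' b' assume ab: "(a,b) \<in> r'" "(a',b') \<in> r'"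
      show "card (out_nbhd a p' \<inter> out_nbhd b (q'\<inverse>)) = card (out_nbhd a' p' \<inter> out_nbhd b' (q'\<inverse>))"
        using eq[OF ab(1)] eq[OF ab(2)] const[of p q r a b a' b'] pqr ab TS by auto
    qed
  qed
  have "assoc_scheme Y SY" unfolding assoc_scheme_def by (intro conjI 1 2 3 4 5 6 7)
  thus ?thesis unfolding Y_def SY_def .
qed


lemma sub_hop:
  assumes x0: "x0 \<in> X" and p: "p \<in> T" and q: "q \<in> T"
  defines "Y \<equiv> out_nbhd x0 (\<Union>T)"
  defines "SY \<equiv> (\<lambda>p. p \<inter> Y \<times> Y) ` T"
  shows "(\<lambda>r. r \<inter> Y \<times> Y) ` scheme_hop S p q = scheme_hop SY (p \<inter> Y \<times> Y) (q \<inter> Y \<times> Y)"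
proof -
  have Ysub: "Y \<subseteq> X" using Rsub unfolding Y_def out_nbhd_def by blast
  interpret Y: fscheme Y SY
  proof
    show "assoc_scheme Y SY" using sub_scheme[OF x0] unfolding Y_def SY_def .
    show "finite Y" using Ysub finX finite_subset by blast
  qed
  have wY: "w \<in> Y" if "u \<in> Y" "(u,w) \<in> t" "t \<in> T" for u w t
    using Yclosed[of x0 u t w] that unfolding Y_def out_nbhd_def by simp
  have pY: "p \<inter> Y \<times> Y \<in> SY" "q \<inter> Y \<times> Y \<in> SY" unfolding SY_def using p q by auto
  show ?thesis
  proof
    show "(\<lambda>r. r \<inter> Y \<times> Y) ` scheme_hop S p q \<subseteq> scheme_hop SY (p \<inter> Y \<times> Y) (q \<inter> Y \<times> Y)"
    proof
      fix r' assume "r' \<in> (\<lambda>r. r \<inter> Y \<times> Y) ` scheme_hop S p q"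
      then obtain r where r: "r \<in> scheme_hop S p q" "r' = r \<inter> Y \<times> Y" by blast
      have rT: "r \<in> T" using Tcl p q r by blast
      have rS: "r \<in> S" using rT TS by blast
      have r'S: "r' \<in> SY" unfolding SY_def using rT r by blast
      obtain u v where uv: "(u,v) \<in> r'" using Y.nonemp[OF r'S] by auto
      obtain w where w: "(u,w) \<in> p" "(w,v) \<in> q"
        using hop_char[of p q r u v] r rS p q TS uv by blast
      have "w \<in> Y" using wY[of u w p] w uv r p by blast
      hence "\<exists>w. (u,w) \<in> p \<inter> Y \<times> Y \<and> (w,v) \<in> q \<inter> Y \<times> Y" using w uv r by blast
      thus "r' \<in> scheme_hop SY (p \<inter> Y \<times> Y) (q \<inter> Y \<times> Y)"
        using Y.hop_char[OF pY r'S uv] by blast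
    qed
    show "scheme_hop SY (p \<inter> Y \<times> Y) (q \<inter> Y \<times> Y) \<subseteq> (\<lambda>r. r \<inter> Y \<times> Y) ` scheme_hop S p q"
    proof
      fix r' assume r': "r' \<in> scheme_hop SY (p \<inter> Y \<times> Y) (q \<inter> Y \<times> Y)"
      hence r'S: "r' \<in> SY" using Y.hop_sub by blast
      then obtain r where r: "r \<in> T" "r' = r \<inter> Y \<times> Y" unfolding SY_def by blast
      obtain u v where uv: "(u,v) \<in> r'" using Y.nonemp[OF r'S] by auto
      obtain w where w: "(u,w) \<in> p \<inter> Y \<times> Y" "(w,v) \<in> q \<inter> Y \<times> Y"
        using Y.hop_char[OF pY r'S uv] r' by blast
      have "r \<in> scheme_hop S p q"
        using hop_char[of p q r u v] r p q TS uv w by blast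
      thus "r' \<in> (\<lambda>r. r \<inter> Y \<times> Y) ` scheme_hop S p q" using r by blast
    qed
  qed
qed

lemma sub_inj:
  assumes x0: "x0 \<in> X"
  shows "inj_on (\<lambda>p. p \<inter> out_nbhd x0 (\<Union>T) \<times> out_nbhd x0 (\<Union>T)) T"
proof
  fix p q assume pq: "p \<in> T" "q \<in> T"
    "p \<inter> out_nbhd x0 (\<Union>T) \<times> out_nbhd x0 (\<Union>T) = q \<inter> out_nbhd x0 (\<Union>T) \<times> out_nbhd x0 (\<Union>T)"
  obtain y where y: "(x0,y) \<in> p" using outdeg[OF _ x0, of p] pq TS by blast
  have "(x0,x0) \<in> \<Union>T" using Rrefl[OF x0] .
  moreover have "(x0,y) \<in> \<Union>T" using y pq by blast
  ultimately have "(x0,y) \<in> p \<inter> out_nbhd x0 (\<Union>T) \<times> out_nbhd x0 (\<Union>T)" using y unfolding out_nbhd_def by auto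
  hence "(x0,y) \<in> q" using pq by blast
  thus "p = q" using disj[of p q] y pq TS by blast
qed

context
  assumes Tnorm: "\<forall>p\<in>S. p O \<Union>T = \<Union>T O p"
begin

definition rep where "rep x = (SOME y. y \<in> out_nbhd x (\<Union>T))"
definition Xq where "Xq = rep ` X"
definition pbar where "pbar p = {(u,v). u \<in> Xq \<and> v \<in> Xq \<and> (u,v) \<in> p O \<Union>T}"
definition Sq where "Sq = pbar ` S"

lemma RR: "\<Union>T O \<Union>T \<subseteq> \<Union>T" using Rtrans by blast

lemma Req: "(x,y) \<in> \<Union>T \<Longrightarrow> out_nbhd x (\<Union>T) = out_nbhd y (\<Union>T)"
  unfolding out_nbhd_def using Rtrans Rsym by blast

lemma rep_in: "x \<in> X \<Longrightarrow> (x, rep x) \<in> \<Union>T"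
proof -
  assume "x \<in> X"
  hence "x \<in> out_nbhd x (\<Union>T)" using Rrefl unfolding out_nbhd_def by simp
  hence "rep x \<in> out_nbhd x (\<Union>T)" unfolding rep_def by (rule someI)
  thus ?thesis unfolding out_nbhd_def by simp
qed

lemma rep_eq: "(x,y) \<in> \<Union>T \<Longrightarrow> rep x = rep y"
  unfolding rep_def using Req by simp

lemma Xq_sub: "Xq \<subseteq> X"
  unfolding Xq_def using rep_in Rsub by blast

lemma Xq_rep: "u \<in> Xq \<Longrightarrow> rep u = u"
proof -
  assume "u \<in> Xq"
  then obtain x where x: "x \<in> X" "u = rep x" unfolding Xq_def by blast
  have "(x,u) \<in> \<Union>T" using rep_in x by simp
  hence "rep x = rep u" by (rule rep_eq)
  thus ?thesis using x by simp
qed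

lemma Xq_R: "u \<in> Xq \<Longrightarrow> v \<in> Xq \<Longrightarrow> (u,v) \<in> \<Union>T \<Longrightarrow> u = v"
  using Xq_rep rep_eq by metis

lemma rep_Xq: "x \<in> X \<Longrightarrow> rep x \<in> Xq" unfolding Xq_def by blast

lemma pR_inv:
  assumes p: "p \<in> S" and R: "(a',a) \<in> \<Union>T" "(b,b') \<in> \<Union>T" and ab: "(a,b) \<in> p O \<Union>T"
  shows "(a',b') \<in> p O \<Union>T"
proof -
  have "(a',b) \<in> \<Union>T O (p O \<Union>T)" using R ab by blast
  hence "(a',b) \<in> (\<Union>T O p) O \<Union>T" by blast
  hence "(a',b) \<in> (p O \<Union>T) O \<Union>T" using Tnorm p by simp
  hence "(a',b') \<in> p O (\<Union>T O \<Union>T) O \<Union>T" using R by blast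
  thus ?thesis using RR by blast
qed

lemma pR_sub: "p \<in> S \<Longrightarrow> p O \<Union>T \<subseteq> X \<times> X" using sub Rsub by blast

lemma pR_union: "p \<in> S \<Longrightarrow> p O \<Union>T = \<Union>(set_hop (scheme_hop S) {p} T)"
  using unionU[of "{p}" T] TS by simp

lemma pR_sat:
  assumes "p \<in> S" "s \<in> S" "x \<in> s" "x \<in> p O \<Union>T" shows "s \<subseteq> p O \<Union>T"
proof -
  have "set_hop (scheme_hop S) {p} T \<subseteq> S" unfolding set_hop_def using hop_sub by blast
  thus ?thesis using Usat[of "set_hop (scheme_hop S) {p} T" s x] pR_union[OF assms(1)] assms by simp
qed

lemma pR_meet:
  assumes p: "p \<in> S" and q: "q \<in> S" and uv: "(u,v) \<in> p O \<Union>T" "(u,v) \<in> q O \<Union>T"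
  shows "q O \<Union>T \<subseteq> p O \<Union>T"
proof -
  obtain y where y: "(u,y) \<in> q" "(y,v) \<in> \<Union>T" using uv by blast
  have "u \<in> X" using pR_sub[OF p] uv by auto
  hence "(u,u) \<in> \<Union>T" using Rrefl by simp
  hence "(u,y) \<in> p O \<Union>T" using pR_inv[OF p _ Rsym[OF y(2)] uv(1)] by simp
  hence "q \<subseteq> p O \<Union>T" using pR_sat[OF p q y(1)] by simp
  hence "q O \<Union>T \<subseteq> p O \<Union>T O \<Union>T" by blast
  thus ?thesis using RR by blast
qed

lemma pbar_eq:
  assumes p: "p \<in> S" and q: "q \<in> S"
  shows "pbar p = pbar q \<longleftrightarrow> p O \<Union>T = q O \<Union>T"
proof
  assume "p O \<Union>T = q O \<Union>T" thus "pbar p = pbar q" unfolding pbar_def by simp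
next
  assume eq: "pbar p = pbar q"
  have *: "(a,b) \<in> p' O \<Union>T" if "pbar p' = pbar q'" "p' \<in> S" "q' \<in> S" "(a,b) \<in> q' O \<Union>T" for p' q' a b
  proof -
    have ab: "a \<in> X" "b \<in> X" using pR_sub[OF that(3)] that(4) by auto
    have "(rep a, rep b) \<in> q' O \<Union>T" using pR_inv[OF that(3) Rsym[OF rep_in[OF ab(1)]] rep_in[OF ab(2)] that(4)] .
    hence "(rep a, rep b) \<in> pbar q'" unfolding pbar_def using rep_Xq ab by blast
    hence "(rep a, rep b) \<in> p' O \<Union>T" using that(1) unfolding pbar_def by blast
    thus ?thesis using pR_inv[OF that(2) rep_in[OF ab(1)] Rsym[OF rep_in[OF ab(2)]]] by simp
  qed
  have s1: "\<And>a b. (a,b) \<in> q O \<Union>T \<Longrightarrow> (a,b) \<in> p O \<Union>T" using *[OF eq p q] by blast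
  have s2: "\<And>a b. (a,b) \<in> p O \<Union>T \<Longrightarrow> (a,b) \<in> q O \<Union>T" using *[OF eq[symmetric] q p] by blast
  show "p O \<Union>T = q O \<Union>T" by (metis s1 s2 subrelI subset_antisym)
qed

lemma classsize: "x \<in> X \<Longrightarrow> y \<in> X \<Longrightarrow> card (out_nbhd x (\<Union>T)) = card (out_nbhd y (\<Union>T))"
proof -
  assume xy: "x \<in> X" "y \<in> X"
  have e: "out_nbhd z (\<Union>T) = {w. (z,w) \<in> \<Union>T \<and> (w,z) \<in> \<Union>T}" for z
    unfolding out_nbhd_def using Rsym by blast
  have "(x,x) \<in> Id_on X" "(y,y) \<in> Id_on X" using xy by auto
  hence "card {w. (x,w) \<in> \<Union>T \<and> (w,x) \<in> \<Union>T} = card {w. (y,w) \<in> \<Union>T \<and> (w,y) \<in> \<Union>T}"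
    using count_const[OF TS TS IdS, of x x y y] by blast
  thus ?thesis by (simp only: e)
qed

lemma classfin: "finite (out_nbhd x (\<Union>T))"
proof -
  have "out_nbhd x (\<Union>T) \<subseteq> X" using Rsub unfolding out_nbhd_def by blast
  thus ?thesis using finX finite_subset by blast
qed

lemma N_card:
  assumes p: "p \<in> S" and q: "q \<in> S" and u: "u \<in> X" and v: "v \<in> X"
  shows "card {w. (u,w) \<in> p O \<Union>T \<and> (w,v) \<in> q O \<Union>T}
       = card {w\<in>Xq. (u,w) \<in> p O \<Union>T \<and> (w,v) \<in> q O \<Union>T} * card (out_nbhd u (\<Union>T))"
proof -
  define W where "W = {w\<in>Xq. (u,w) \<in> p O \<Union>T \<and> (w,v) \<in> q O \<Union>T}"
  have uu: "(u,u) \<in> \<Union>T" "(v,v) \<in> \<Union>T" using Rrefl u v by auto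
  have eqN: "{w. (u,w) \<in> p O \<Union>T \<and> (w,v) \<in> q O \<Union>T} = \<Union>((\<lambda>w. out_nbhd w (\<Union>T)) ` W)"
  proof
    show "{w. (u,w) \<in> p O \<Union>T \<and> (w,v) \<in> q O \<Union>T} \<subseteq> \<Union>((\<lambda>w. out_nbhd w (\<Union>T)) ` W)"
    proof
      fix x assume x: "x \<in> {w. (u,w) \<in> p O \<Union>T \<and> (w,v) \<in> q O \<Union>T}"
      have xX: "x \<in> X" using x pR_sub[OF p] by auto
      have "(u, rep x) \<in> p O \<Union>T" using pR_inv[OF p uu(1) rep_in[OF xX]] x by simp
      moreover have "(rep x, v) \<in> q O \<Union>T" using pR_inv[OF q Rsym[OF rep_in[OF xX]] uu(2)] x by simp
      ultimately have "rep x \<in> W" unfolding W_def using rep_Xq[OF xX] by simp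
      moreover have "x \<in> out_nbhd (rep x) (\<Union>T)" using Rsym[OF rep_in[OF xX]] unfolding out_nbhd_def by simp
      ultimately show "x \<in> \<Union>((\<lambda>w. out_nbhd w (\<Union>T)) ` W)" by blast
    qed
    show "\<Union>((\<lambda>w. out_nbhd w (\<Union>T)) ` W) \<subseteq> {w. (u,w) \<in> p O \<Union>T \<and> (w,v) \<in> q O \<Union>T}"
    proof
      fix x assume "x \<in> \<Union>((\<lambda>w. out_nbhd w (\<Union>T)) ` W)"
      then obtain w where w: "w \<in> W" "(w,x) \<in> \<Union>T" unfolding out_nbhd_def by blast
      have "(u,x) \<in> p O \<Union>T" using pR_inv[OF p uu(1) w(2)] w(1) unfolding W_def by simp
      moreover have "(x,v) \<in> q O \<Union>T" using pR_inv[OF q Rsym[OF w(2)] uu(2)] w(1) unfolding W_def by simp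
      ultimately show "x \<in> {w. (u,w) \<in> p O \<Union>T \<and> (w,v) \<in> q O \<Union>T}" by simp
    qed
  qed
  have "W \<subseteq> X" using Xq_sub unfolding W_def by blast
  hence finW: "finite W" using finX finite_subset by blast
  have "card (\<Union>((\<lambda>w. out_nbhd w (\<Union>T)) ` W)) = (\<Sum>w\<in>W. card (out_nbhd w (\<Union>T)))"
  proof (rule card_UN_disjoint[OF finW])
    show "\<forall>i\<in>W. finite (out_nbhd i (\<Union>T))" using classfin by blast
    show "\<forall>i\<in>W. \<forall>j\<in>W. i \<noteq> j \<longrightarrow> out_nbhd i (\<Union>T) \<inter> out_nbhd j (\<Union>T) = {}"
    proof (intro ballI impI)
      fix i j assume ij: "i \<in> W" "j \<in> W" "i \<noteq> j"
      show "out_nbhd i (\<Union>T) \<inter> out_nbhd j (\<Union>T) = {}"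
      proof (rule ccontr)
        assume "out_nbhd i (\<Union>T) \<inter> out_nbhd j (\<Union>T) \<noteq> {}"
        then obtain x where "(i,x) \<in> \<Union>T" "(j,x) \<in> \<Union>T" unfolding out_nbhd_def by blast
        hence "(i,j) \<in> \<Union>T" using Rtrans[of i x j] Rsym[of j x] by blast
        thus False using Xq_R ij unfolding W_def by blast
      qed
    qed
  qed
  also have "\<dots> = (\<Sum>w\<in>W. card (out_nbhd u (\<Union>T)))"
  proof (rule sum.cong)
    fix w assume "w \<in> W"
    hence "w \<in> X" using Xq_sub unfolding W_def by blast
    thus "card (out_nbhd w (\<Union>T)) = card (out_nbhd u (\<Union>T))" using classsize[of w u] u by blast
  qed simp
  also have "\<dots> = card W * card (out_nbhd u (\<Union>T))" by simp
  finally have "card (\<Union>((\<lambda>w. out_nbhd w (\<Union>T)) ` W)) = card W * card (out_nbhd u (\<Union>T))" .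
  hence "card {w. (u,w) \<in> p O \<Union>T \<and> (w,v) \<in> q O \<Union>T} = card W * card (out_nbhd u (\<Union>T))"
    by (simp only: eqN)
  thus ?thesis unfolding W_def .
qed


lemma setS: "p \<in> S \<Longrightarrow> set_hop (scheme_hop S) {p} T \<subseteq> S"
  unfolding set_hop_def using hop_sub by blast

lemma N_const:
  assumes p: "p \<in> S" and q: "q \<in> S" and r: "r \<in> S"
    and uv: "(u,v) \<in> r O \<Union>T" and uv': "(u',v') \<in> r O \<Union>T"
  shows "card {w. (u,w) \<in> p O \<Union>T \<and> (w,v) \<in> q O \<Union>T} = card {w. (u',w) \<in> p O \<Union>T \<and> (w,v') \<in> q O \<Union>T}"
proof -
  obtain x where x: "(u,x) \<in> r" "(x,v) \<in> \<Union>T" using uv by blast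
  obtain x' where x': "(u',x') \<in> r" "(x',v') \<in> \<Union>T" using uv' by blast
  have shift: "{w. (a,w) \<in> p O \<Union>T \<and> (w,b) \<in> q O \<Union>T} = {w. (a,w) \<in> p O \<Union>T \<and> (w,c) \<in> q O \<Union>T}"
    if "(c,b) \<in> \<Union>T" for a b c
  proof -
    have "(w,b) \<in> q O \<Union>T \<longleftrightarrow> (w,c) \<in> q O \<Union>T" if "w \<in> X" for w
    proof
      have ww: "(w,w) \<in> \<Union>T" using Rrefl that by simp
      show "(w,b) \<in> q O \<Union>T \<Longrightarrow> (w,c) \<in> q O \<Union>T" using pR_inv[OF q ww Rsym[OF \<open>(c,b) \<in> \<Union>T\<close>]] by simp
      show "(w,c) \<in> q O \<Union>T \<Longrightarrow> (w,b) \<in> q O \<Union>T" using pR_inv[OF q ww \<open>(c,b) \<in> \<Union>T\<close>] by simp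
    qed
    moreover have "(a,w) \<in> p O \<Union>T \<Longrightarrow> w \<in> X" for w using pR_sub[OF p] by blast
    ultimately show ?thesis by blast
  qed
  have e1: "{w. (u,w) \<in> p O \<Union>T \<and> (w,v) \<in> q O \<Union>T} = {w. (u,w) \<in> p O \<Union>T \<and> (w,x) \<in> q O \<Union>T}"
    using shift x(2) by blast
  have e2: "{w. (u',w) \<in> p O \<Union>T \<and> (w,v') \<in> q O \<Union>T} = {w. (u',w) \<in> p O \<Union>T \<and> (w,x') \<in> q O \<Union>T}"
    using shift x'(2) by blast
  have "card {w. (u,w) \<in> \<Union>(set_hop (scheme_hop S) {p} T) \<and> (w,x) \<in> \<Union>(set_hop (scheme_hop S) {q} T)}
      = card {w. (u',w) \<in> \<Union>(set_hop (scheme_hop S) {p} T) \<and> (w,x') \<in> \<Union>(set_hop (scheme_hop S) {q} T)}"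
    by (rule count_const[OF setS[OF p] setS[OF q] r x(1) x'(1)])
  hence "card {w. (u,w) \<in> p O \<Union>T \<and> (w,x) \<in> q O \<Union>T} = card {w. (u',w) \<in> p O \<Union>T \<and> (w,x') \<in> q O \<Union>T}"
    by (simp only: pR_union[OF p, symmetric] pR_union[OF q, symmetric])
  thus ?thesis using e1 e2 by simp
qed

lemma Xq_fin: "finite Xq" using Xq_sub finX finite_subset by blast

lemma pbar_ne: "p \<in> S \<Longrightarrow> pbar p \<noteq> {}"
proof -
  assume p: "p \<in> S"
  obtain a b where ab: "(a,b) \<in> p" using nonemp[OF p] by auto
  have X: "a \<in> X" "b \<in> X" using sub[OF p] ab by auto
  have "(a,b) \<in> p O \<Union>T" using ab Rrefl[OF X(2)] by blast
  hence "(rep a, rep b) \<in> p O \<Union>T" using pR_inv[OF p Rsym[OF rep_in[OF X(1)]] rep_in[OF X(2)]] by simp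
  hence "(rep a, rep b) \<in> pbar p" unfolding pbar_def using rep_Xq X by blast
  thus ?thesis by blast
qed

lemma pbar_out: "u \<in> Xq \<Longrightarrow> v \<in> Xq \<Longrightarrow> out_nbhd u (pbar p) \<inter> out_nbhd v ((pbar q)\<inverse>) = {w\<in>Xq. (u,w) \<in> p O \<Union>T \<and> (w,v) \<in> q O \<Union>T}"
  unfolding out_nbhd_def pbar_def by auto

lemma quot_scheme: "assoc_scheme Xq Sq"
proof -
  have 1: "Xq \<noteq> {}" unfolding Xq_def using Xne by blast
  have 2: "\<forall>p\<in>Sq. p \<noteq> {}" unfolding Sq_def using pbar_ne by blast
  have 3: "\<Union>Sq = Xq \<times> Xq"
  proof
    show "\<Union>Sq \<subseteq> Xq \<times> Xq" unfolding Sq_def pbar_def by blast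
    show "Xq \<times> Xq \<subseteq> \<Union>Sq"
    proof
      fix x assume x: "x \<in> Xq \<times> Xq"
      then obtain u v where uv: "x = (u,v)" "u \<in> Xq" "v \<in> Xq" by blast
      have "u \<in> X" "v \<in> X" using uv Xq_sub by auto
      then obtain p where p: "p \<in> S" "(u,v) \<in> p" using cover by blast
      have "(u,v) \<in> p O \<Union>T" using p Rrefl[OF \<open>v \<in> X\<close>] by blast
      hence "x \<in> pbar p" unfolding pbar_def using uv by simp
      thus "x \<in> \<Union>Sq" unfolding Sq_def using p by blast
    qed
  qed
  have 4: "\<forall>p\<in>Sq. \<forall>q\<in>Sq. p \<noteq> q \<longrightarrow> p \<inter> q = {}"
  proof (intro ballI impI)
    fix p' q' assume "p' \<in> Sq" "q' \<in> Sq" "p' \<noteq> q'"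
    then obtain p q where pq: "p \<in> S" "q \<in> S" "p' = pbar p" "q' = pbar q" unfolding Sq_def by blast
    show "p' \<inter> q' = {}"
    proof (rule ccontr)
      assume "p' \<inter> q' \<noteq> {}"
      then obtain u v where "(u,v) \<in> p O \<Union>T" "(u,v) \<in> q O \<Union>T" unfolding pq pbar_def by blast
      hence "p O \<Union>T = q O \<Union>T" using pR_meet[OF pq(1,2)] pR_meet[OF pq(2,1)] by blast
      hence "p' = q'" using pbar_eq[OF pq(1,2)] pq by simp
      thus False using \<open>p' \<noteq> q'\<close> by simp
    qed
  qed
  have 5: "Id_on Xq \<in> Sq"
  proof -
    have "pbar (Id_on X) = Id_on Xq"
    proof
      show "pbar (Id_on X) \<subseteq> Id_on Xq" unfolding pbar_def using Xq_R by blast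
      show "Id_on Xq \<subseteq> pbar (Id_on X)"
      proof
        fix x assume "x \<in> Id_on Xq"
        then obtain u where u: "x = (u,u)" "u \<in> Xq" by blast
        have "u \<in> X" using u Xq_sub by auto
        hence "(u,u) \<in> Id_on X O \<Union>T" using Rrefl by blast
        thus "x \<in> pbar (Id_on X)" unfolding pbar_def using u by simp
      qed
    qed
    thus ?thesis unfolding Sq_def using IdS by force
  qed
  have 6: "\<forall>p\<in>Sq. p\<inverse> \<in> Sq"
  proof
    fix p' assume "p' \<in> Sq"
    then obtain p where p: "p \<in> S" "p' = pbar p" unfolding Sq_def by blast
    have pc: "p\<inverse> \<in> S" using convS[OF p(1)] .
    have "(p O \<Union>T)\<inverse> = \<Union>T O p\<inverse>" using Rsym by blast
    also have "\<dots> = (p\<inverse> O \<Union>T)" using Tnorm pc by simp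
    finally have "p'\<inverse> = pbar (p\<inverse>)" unfolding p pbar_def by blast
    thus "p'\<inverse> \<in> Sq" unfolding Sq_def using pc by blast
  qed
  have 7: "\<forall>p\<in>Sq. \<forall>q\<in>Sq. \<forall>r\<in>Sq. \<exists>c. \<forall>y\<in>Xq. \<forall>z\<in>out_nbhd y r.
         card (out_nbhd y p \<inter> out_nbhd z (q\<inverse>)) = c"
  proof (intro ballI)
    fix p' q' r' assume "p' \<in> Sq" "q' \<in> Sq" "r' \<in> Sq"
    then obtain p q r where pqr: "p \<in> S" "q \<in> S" "r \<in> S" "p' = pbar p" "q' = pbar q"
       "r' = pbar r" unfolding Sq_def by blast
    show "\<exists>c. \<forall>y\<in>Xq. \<forall>z\<in>out_nbhd y r'. card (out_nbhd y p' \<inter> out_nbhd z (q'\<inverse>)) = c"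
    proof (rule ex_const)
      fix a b a' b' assume ab: "(a,b) \<in> r'" "(a',b') \<in> r'"
      have inX: "a \<in> Xq" "b \<in> Xq" "a' \<in> Xq" "b' \<in> Xq" "(a,b) \<in> r O \<Union>T" "(a',b') \<in> r O \<Union>T"
        using ab unfolding pqr pbar_def by auto
      have aX: "a \<in> X" "b \<in> X" "a' \<in> X" "b' \<in> X" using inX Xq_sub by auto
      have k: "card (out_nbhd a (\<Union>T)) = card (out_nbhd a' (\<Union>T))" using classsize aX by blast
      have kpos: "card (out_nbhd a (\<Union>T)) > 0"
      proof -
        have "a \<in> out_nbhd a (\<Union>T)" using Rrefl[OF aX(1)] unfolding out_nbhd_def by simp
        thus ?thesis using classfin card_gt_0_iff by blast
      qed
      have "card {w\<in>Xq. (a,w) \<in> p O \<Union>T \<and> (w,b) \<in> q O \<Union>T} * card (out_nbhd a (\<Union>T))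
          = card {w\<in>Xq. (a',w) \<in> p O \<Union>T \<and> (w,b') \<in> q O \<Union>T} * card (out_nbhd a (\<Union>T))"
      proof -
        have "card {w\<in>Xq. (a,w) \<in> p O \<Union>T \<and> (w,b) \<in> q O \<Union>T} * card (out_nbhd a (\<Union>T))
           = card {w. (a,w) \<in> p O \<Union>T \<and> (w,b) \<in> q O \<Union>T}" using N_card[OF pqr(1,2) aX(1,2)] by simp
        also have "\<dots> = card {w. (a',w) \<in> p O \<Union>T \<and> (w,b') \<in> q O \<Union>T}" using N_const[OF pqr(1-3) inX(5,6)] .
        also have "\<dots> = card {w\<in>Xq. (a',w) \<in> p O \<Union>T \<and> (w,b') \<in> q O \<Union>T} * card (out_nbhd a' (\<Union>T))"
          using N_card[OF pqr(1,2) aX(3,4)] .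
        finally show ?thesis using k by simp
      qed
      hence "card {w\<in>Xq. (a,w) \<in> p O \<Union>T \<and> (w,b) \<in> q O \<Union>T}
          = card {w\<in>Xq. (a',w) \<in> p O \<Union>T \<and> (w,b') \<in> q O \<Union>T}" using kpos by simp
      thus "card (out_nbhd a p' \<inter> out_nbhd b (q'\<inverse>)) = card (out_nbhd a' p' \<inter> out_nbhd b' (q'\<inverse>))"
        using pbar_out inX unfolding pqr by simp
    qed
  qed
  show ?thesis unfolding assoc_scheme_def by (intro conjI 1 2 3 4 5 6 7)
qed

lemma quot_hop:
  assumes p: "p \<in> S" and q: "q \<in> S" and r: "r \<in> S" and Z: "Z \<subseteq> S"
    and ZU: "\<Union>Z = (p O \<Union>T) O (q O \<Union>T)"
  shows "pbar r \<in> scheme_hop Sq (pbar p) (pbar q) \<longleftrightarrow> (\<exists>s\<in>Z. pbar s = pbar r)"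
proof -
  interpret Q: fscheme Xq Sq using quot_scheme Xq_fin by unfold_locales
  have inS: "pbar p \<in> Sq" "pbar q \<in> Sq" "pbar r \<in> Sq" unfolding Sq_def using p q r by auto
  obtain u v where uv: "(u,v) \<in> pbar r" using pbar_ne[OF r] by auto
  have uv': "u \<in> Xq" "v \<in> Xq" "(u,v) \<in> r O \<Union>T" using uv unfolding pbar_def by auto
  have "pbar r \<in> scheme_hop Sq (pbar p) (pbar q) \<longleftrightarrow> (\<exists>w. (u,w) \<in> pbar p \<and> (w,v) \<in> pbar q)"
    using Q.hop_char[OF inS uv] .
  also have "\<dots> \<longleftrightarrow> (u,v) \<in> (p O \<Union>T) O (q O \<Union>T)"
  proof
    assume "\<exists>w. (u,w) \<in> pbar p \<and> (w,v) \<in> pbar q"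
    thus "(u,v) \<in> (p O \<Union>T) O (q O \<Union>T)" unfolding pbar_def by blast
  next
    assume "(u,v) \<in> (p O \<Union>T) O (q O \<Union>T)"
    then obtain w where w: "(u,w) \<in> p O \<Union>T" "(w,v) \<in> q O \<Union>T" by blast
    have wX: "w \<in> X" using w pR_sub[OF p] by auto
    have uX: "u \<in> X" "v \<in> X" using uv' Xq_sub by auto
    have "(u, rep w) \<in> p O \<Union>T" using pR_inv[OF p Rrefl[OF uX(1)] rep_in[OF wX] w(1)] .
    moreover have "(rep w, v) \<in> q O \<Union>T" using pR_inv[OF q Rsym[OF rep_in[OF wX]] Rrefl[OF uX(2)] w(2)] .
    ultimately show "\<exists>w. (u,w) \<in> pbar p \<and> (w,v) \<in> pbar q"
      unfolding pbar_def using uv' rep_Xq[OF wX] by blast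
  qed
  also have "\<dots> \<longleftrightarrow> (\<exists>s\<in>Z. pbar s = pbar r)"
  proof
    assume "(u,v) \<in> (p O \<Union>T) O (q O \<Union>T)"
    then obtain s where s: "s \<in> Z" "(u,v) \<in> s" using ZU by blast
    have sS: "s \<in> S" using s Z by blast
    have "v \<in> X" using uv' Xq_sub by auto
    hence "(u,v) \<in> s O \<Union>T" using s Rrefl by blast
    hence "s O \<Union>T = r O \<Union>T" using pR_meet[OF sS r _ uv'(3)] pR_meet[OF r sS uv'(3)] by blast
    thus "\<exists>s\<in>Z. pbar s = pbar r" using s pbar_eq[OF sS r] by blast
  next
    assume "\<exists>s\<in>Z. pbar s = pbar r"
    then obtain s where s: "s \<in> Z" "pbar s = pbar r" by blast
    have sS: "s \<in> S" using s Z by blast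
    have "(u,v) \<in> s O \<Union>T" using uv'(3) pbar_eq[OF sS r] s by simp
    moreover have "s \<subseteq> (p O \<Union>T) O (q O \<Union>T)" using s ZU by blast
    ultimately have "(u,v) \<in> (p O \<Union>T) O (q O \<Union>T) O \<Union>T" by blast
    thus "(u,v) \<in> (p O \<Union>T) O (q O \<Union>T)" using RR by blast
  qed
  finally show ?thesis .
qed

lemma pbar_S: "p \<in> S \<Longrightarrow> pbar p \<in> Sq" unfolding Sq_def by blast

end

end

end



lemma f_set:
  assumes hom: "\<forall>a\<in>B. \<forall>b\<in>B. f ` hop a b = kop (f a) (f b)" and C: "C \<subseteq> B" and D: "D \<subseteq> B"
  shows "f ` set_hop hop C D = set_hop kop (f ` C) (f ` D)"
proof -
  have "f ` set_hop hop C D = (\<Union>x\<in>C. \<Union>y\<in>D. f ` hop x y)" unfolding set_hop_def by (simp add: image_UN)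
  also have "\<dots> = (\<Union>x\<in>C. \<Union>y\<in>D. kop (f x) (f y))" using hom C D by (intro SUP_cong refl) blast
  also have "\<dots> = set_hop kop (f ` C) (f ` D)" unfolding set_hop_def by simp
  finally show ?thesis .
qed

lemma hg_closed:
  assumes "hypergroup H hop" "a \<in> H" "b \<in> H" shows "hop a b \<subseteq> H"
proof -
  have "\<forall>a\<in>H. \<forall>b\<in>H. hop a b \<noteq> {} \<and> hop a b \<subseteq> H"
    using assms(1)[unfolded hypergroup_def, THEN conjunct2, THEN conjunct1] .
  thus ?thesis using assms(2,3) by blast
qed

lemma hg_ident:
  assumes "hypergroup H hop" shows "is_hg_identity H hop (hg_unit H hop)"
proof -
  have "\<exists>!e. is_hg_identity H hop e"
    using assms[unfolded hypergroup_def, THEN conjunct2, THEN conjunct2, THEN conjunct2, THEN conjunct1] .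
  thus ?thesis unfolding hg_unit_def by (rule theI')
qed

lemma hg_inv_ex:
  assumes "hypergroup H hop" "h \<in> H" shows "\<exists>h'. is_hg_inverse H hop h h'"
proof -
  have "\<forall>h\<in>H. \<exists>!h'. is_hg_inverse H hop h h'"
    using assms(1)[unfolded hypergroup_def, THEN conjunct2, THEN conjunct2, THEN conjunct2, THEN conjunct2, THEN conjunct1] .
  thus ?thesis using assms(2) by blast
qed

lemma set_hop_sub:
  assumes "hypergroup B hop" "C \<subseteq> B" "D \<subseteq> B" shows "set_hop hop C D \<subseteq> B"
proof
  fix x assume "x \<in> set_hop hop C D"
  then obtain c d where "c \<in> C" "d \<in> D" "x \<in> hop c d" unfolding set_hop_def by blast
  thus "x \<in> B" using hg_closed[OF assms(1), of c d] assms(2,3) by blast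
qed

theorem proposition4p9:
  fixes B A :: "'a set" and hop :: "'a \<Rightarrow> 'a \<Rightarrow> 'a set"
  assumes "hypergroup B hop"
    and "finitely_realizable B hop"
    and "normal_sub_hypergroup A B hop"
  shows "finitely_realizable A hop \<and>
         finitely_realizable (quot_carrier B A hop) (quot_hop A hop)"
proof -
  note hB = assms(1)
  obtain X :: "nat set" and S f where finX: "finite X" and sch: "assoc_scheme X S"
    and bij: "bij_betw f B S" and hom: "\<forall>a\<in>B. \<forall>b\<in>B. f ` hop a b = scheme_hop S (f a) (f b)"
    using assms(2) unfolding finitely_realizable_def hg_iso_def by blast
  interpret fscheme X S using sch finX by unfold_locales
  have AB: "A \<subseteq> B" and hA: "hypergroup A hop" and norm: "\<forall>b\<in>B. set_hop hop {b} A = set_hop hop A {b}"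
    using assms(3) unfolding normal_sub_hypergroup_def sub_hypergroup_def by auto
  have injf: "inj_on f B" and fB: "f ` B = S" using bij unfolding bij_betw_def by auto
  have closA: "hop a b \<subseteq> A" if "a \<in> A" "b \<in> A" for a b using hg_closed[OF hA that] .
  define T where "T = f ` A"
  have TS: "T \<subseteq> S" unfolding T_def using fB AB by blast
  have Tcl: "\<forall>p\<in>T. \<forall>q\<in>T. scheme_hop S p q \<subseteq> T"
  proof (intro ballI)
    fix p q assume "p \<in> T" "q \<in> T"
    then obtain a b where ab: "a \<in> A" "b \<in> A" "p = f a" "q = f b" unfolding T_def by blast
    have "scheme_hop S p q = f ` hop a b" using hom ab AB by auto
    thus "scheme_hop S p q \<subseteq> T" unfolding T_def using closA[OF ab(1,2)] by blast
  qed
  define eA where "eA = hg_unit A hop"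
  have eA: "is_hg_identity A hop eA"
    unfolding eA_def by (rule hg_ident[OF hA])
  have eAA: "eA \<in> A" "hop eA eA = {eA}" using eA unfolding is_hg_identity_def by auto
  have "f ` hop eA eA = scheme_hop S (f eA) (f eA)" using hom eAA AB by blast
  hence "scheme_hop S (f eA) (f eA) = {f eA}" using eAA by simp
  moreover have "f eA \<in> S" using fB eAA AB by blast
  ultimately have feA: "f eA = Id_on X" using ident by blast
  have TId: "Id_on X \<in> T" using feA eAA unfolding T_def by (metis image_eqI)
  have Tconv: "\<forall>p\<in>T. p\<inverse> \<in> T"
  proof
    fix p assume "p \<in> T"
    then obtain a where a: "a \<in> A" "p = f a" unfolding T_def by blast
    obtain h' where h': "is_hg_inverse A hop a h'" using hg_inv_ex[OF hA a(1)] by blast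
    have h'A: "h' \<in> A" "eA \<in> hop h' a" using h' unfolding is_hg_inverse_def eA_def by auto
    have "f ` hop h' a = scheme_hop S (f h') (f a)" using hom h'A a AB by blast
    hence "Id_on X \<in> scheme_hop S (f h') p" using h'A a feA by blast
    moreover have "f h' \<in> S" "p \<in> S" using fB h'A a AB by blast+
    ultimately have "f h' = p\<inverse>" using invS by blast
    thus "p\<inverse> \<in> T" using h'A unfolding T_def by blast
  qed
  obtain x0 where x0: "x0 \<in> X" using Xne by blast
  define Y where "Y = out_nbhd x0 (\<Union>T)"
  define SY where "SY = (\<lambda>p. p \<inter> Y \<times> Y) ` T"
  have part1: "finitely_realizable A hop"
  proof -
    have "Y \<subseteq> X"
    proof
      fix y assume "y \<in> Y"
      hence "(x0,y) \<in> \<Union>T" unfolding Y_def out_nbhd_def by simp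
      thus "y \<in> X" using Rsub[OF TS TId Tconv Tcl] by blast
    qed
    hence finY: "finite Y" using finX finite_subset by blast
    have schY: "assoc_scheme Y SY" using sub_scheme[OF TS TId Tconv Tcl x0] unfolding Y_def SY_def .
    define h where "h = (\<lambda>a. f a \<inter> Y \<times> Y)"
    have i1: "inj_on (\<lambda>p. p \<inter> Y \<times> Y) T" using sub_inj[OF TS TId Tconv Tcl x0] unfolding Y_def .
    have i2: "inj_on f A" using injf AB inj_on_subset by blast
    have "inj_on h A"
    proof (rule inj_onI)
      fix a b assume ab: "a \<in> A" "b \<in> A" "h a = h b"
      have fT: "f a \<in> T" "f b \<in> T" unfolding T_def using ab by auto
      have "f a \<inter> Y \<times> Y = f b \<inter> Y \<times> Y" using ab(3) unfolding h_def .
      hence "f a = f b" by (rule inj_onD[OF i1 _ fT])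
      thus "a = b" by (rule inj_onD[OF i2 _ ab(1,2)])
    qed
    moreover have "h ` A = SY" unfolding h_def SY_def T_def by (simp add: image_image)
    ultimately have bijh: "bij_betw h A SY" unfolding bij_betw_def by simp
    have homh: "\<forall>a\<in>A. \<forall>b\<in>A. h ` hop a b = scheme_hop SY (h a) (h b)"
    proof (intro ballI)
      fix a b assume ab: "a \<in> A" "b \<in> A"
      have fa: "f a \<in> T" "f b \<in> T" unfolding T_def using ab by auto
      have h1: "h ` hop a b = (\<lambda>p. p \<inter> Y \<times> Y) ` (f ` hop a b)" unfolding h_def by (simp add: image_image)
      have aB: "a \<in> B" "b \<in> B" using ab AB by auto
      have "f ` hop a b = scheme_hop S (f a) (f b)" using hom[rule_format, OF aB] .
      hence "(\<lambda>p. p \<inter> Y \<times> Y) ` (f ` hop a b) = (\<lambda>p. p \<inter> Y \<times> Y) ` scheme_hop S (f a) (f b)" by (simp only:)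
      also have "\<dots> = scheme_hop SY (h a) (h b)"
        using sub_hop[OF TS TId Tconv Tcl x0 fa] unfolding h_def Y_def SY_def .
      finally show "h ` hop a b = scheme_hop SY (h a) (h b)" using h1 by (simp only:)
    qed
    have "hg_iso A hop SY (scheme_hop SY)" unfolding hg_iso_def using bijh homh by blast
    thus ?thesis unfolding finitely_realizable_def using finY schY by blast
  qed
  have cos: "f ` hcoset hop b A = set_hop (scheme_hop S) {f b} T" if "b \<in> B" for b
  proof -
    have bB: "{b} \<subseteq> B" using that by simp
    have "f ` hcoset hop b A = set_hop (scheme_hop S) (f ` {b}) (f ` A)"
      unfolding hcoset_def by (rule f_set[OF hom bB AB])
    thus ?thesis unfolding T_def by simp
  qed
  have cosB: "hcoset hop b A \<subseteq> B" if "b \<in> B" for b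
  proof -
    have bB: "{b} \<subseteq> B" using that by simp
    show ?thesis unfolding hcoset_def by (rule set_hop_sub[OF hB bB AB])
  qed
  have cosU: "\<Union>(f ` hcoset hop b A) = f b O \<Union>T" if "b \<in> B" for b
  proof -
    have "{f b} \<subseteq> S" using fB that by blast
    hence "\<Union>(set_hop (scheme_hop S) {f b} T) = \<Union>{f b} O \<Union>T" by (rule unionU[OF _ TS])
    thus ?thesis using cos[OF that] by simp
  qed
  have Tnorm: "\<forall>p\<in>S. p O \<Union>T = \<Union>T O p"
  proof
    fix p assume "p \<in> S"
    then obtain b where b: "b \<in> B" "p = f b" using fB by blast
    have "p O \<Union>T = \<Union>(f ` set_hop hop {b} A)" using cosU[OF b(1)] b unfolding hcoset_def by simp
    also have "\<dots> = \<Union>(f ` set_hop hop A {b})" using norm b by simp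
    also have "\<dots> = \<Union>(set_hop (scheme_hop S) T {p})"
    proof -
      have bB: "{b} \<subseteq> B" using b by simp
      show ?thesis using f_set[OF hom AB bB] b unfolding T_def by simp
    qed
    also have "\<dots> = \<Union>T O p" using unionU[of T "{p}"] TS \<open>p \<in> S\<close> by simp
    finally show "p O \<Union>T = \<Union>T O p" .
  qed
  note L = TS TId Tconv Tcl Tnorm
  have coseq: "hcoset hop b A = hcoset hop c A \<longleftrightarrow> pbar T (f b) = pbar T (f c)" if "b \<in> B" "c \<in> B" for b c
  proof -
    have fbc: "f b \<in> S" "f c \<in> S" using fB that by auto
    have "hcoset hop b A = hcoset hop c A \<longleftrightarrow> f ` hcoset hop b A = f ` hcoset hop c A"
      using inj_on_image_eq_iff[OF injf cosB[OF that(1)] cosB[OF that(2)]] by simp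
    also have "\<dots> \<longleftrightarrow> \<Union>(f ` hcoset hop b A) = \<Union>(f ` hcoset hop c A)"
    proof
      assume e: "\<Union>(f ` hcoset hop b A) = \<Union>(f ` hcoset hop c A)"
      have s1: "f ` hcoset hop b A \<subseteq> S" using image_mono[OF cosB[OF that(1)], of f] fB by simp
      have s2: "f ` hcoset hop c A \<subseteq> S" using image_mono[OF cosB[OF that(2)], of f] fB by simp
      show "f ` hcoset hop b A = f ` hcoset hop c A" using Uinj[OF s1 s2 e] .
    qed simp
    also have "\<dots> \<longleftrightarrow> f b O \<Union>T = f c O \<Union>T" using cosU that by simp
    also have "\<dots> \<longleftrightarrow> pbar T (f b) = pbar T (f c)" using pbar_eq[OF L fbc] by simp
    finally show ?thesis .
  qed
  define g where "g = (\<lambda>C. pbar T (f (SOME b. b \<in> B \<and> C = hcoset hop b A)))"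
  have geq: "g (hcoset hop b A) = pbar T (f b)" if b: "b \<in> B" for b
  proof -
    have "\<exists>b'. b' \<in> B \<and> hcoset hop b A = hcoset hop b' A" using b by blast
    hence "(SOME b'. b' \<in> B \<and> hcoset hop b A = hcoset hop b' A) \<in> B \<and>
       hcoset hop b A = hcoset hop (SOME b'. b' \<in> B \<and> hcoset hop b A = hcoset hop b' A) A"
      by (rule someI_ex)
    then obtain b' where b': "(SOME b'. b' \<in> B \<and> hcoset hop b A = hcoset hop b' A) = b'" "b' \<in> B" "hcoset hop b A = hcoset hop b' A"
      by blast
    have "pbar T (f b') = pbar T (f b)" using coseq[OF b'(2) b] b'(3) by simp
    thus ?thesis unfolding g_def using b'(1) by simp
  qed
  have part2: "finitely_realizable (quot_carrier B A hop) (quot_hop A hop)"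
  proof -
    have schQ: "assoc_scheme (Xq T) (Sq T)" using quot_scheme[OF L] .
    have finQ: "finite (Xq T)" using Xq_fin[OF L] .
    have "inj_on g (quot_carrier B A hop)"
    proof
      fix C D assume CD: "C \<in> quot_carrier B A hop" "D \<in> quot_carrier B A hop" "g C = g D"
      then obtain b c where bc: "b \<in> B" "c \<in> B" "C = hcoset hop b A" "D = hcoset hop c A"
        unfolding quot_carrier_def by blast
      have "pbar T (f b) = pbar T (f c)" using CD(3) geq bc by simp
      thus "C = D" using coseq bc by simp
    qed
    moreover have "g ` quot_carrier B A hop = Sq T"
    proof -
      have "g ` quot_carrier B A hop = (\<lambda>b. pbar T (f b)) ` B"
        unfolding quot_carrier_def image_image using geq by (intro image_cong) auto
      also have "\<dots> = pbar T ` (f ` B)" by (simp only: image_image)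
      also have "\<dots> = pbar T ` S" using fB by simp
      finally show ?thesis using Sq_def[OF L] by simp
    qed
    ultimately have bijg: "bij_betw g (quot_carrier B A hop) (Sq T)" unfolding bij_betw_def by simp
    have homg: "\<forall>C\<in>quot_carrier B A hop. \<forall>D\<in>quot_carrier B A hop.
        g ` quot_hop A hop C D = scheme_hop (Sq T) (g C) (g D)"
    proof (intro ballI)
      fix C D assume "C \<in> quot_carrier B A hop" "D \<in> quot_carrier B A hop"
      then obtain b c where bc: "b \<in> B" "c \<in> B" "C = hcoset hop b A" "D = hcoset hop c A"
        unfolding quot_carrier_def by blast
      have CB: "C \<subseteq> B" "D \<subseteq> B" using cosB bc by auto
      define Z where "Z = f ` set_hop hop C D"
      have ZB: "set_hop hop C D \<subseteq> B" using set_hop_sub[OF hB CB] .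
      have ZS: "Z \<subseteq> S" unfolding Z_def using ZB fB by blast
      have fbc: "f b \<in> S" "f c \<in> S" using fB bc by auto
      have ZU: "\<Union>Z = (f b O \<Union>T) O (f c O \<Union>T)"
      proof -
        have "Z = set_hop (scheme_hop S) (f ` C) (f ` D)" unfolding Z_def using f_set[OF hom CB] .
        moreover have "f ` C \<subseteq> S" "f ` D \<subseteq> S" using CB fB by auto
        ultimately have "\<Union>Z = \<Union>(f ` C) O \<Union>(f ` D)" using unionU by simp
        thus ?thesis using cosU bc by simp
      qed
      have q1: "quot_hop A hop C D = (\<lambda>z. hcoset hop z A) ` set_hop hop C D"
        unfolding quot_hop_def by blast
      have gl: "g ` quot_hop A hop C D = (\<lambda>z. pbar T (f z)) ` set_hop hop C D"
        unfolding q1 image_image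
      proof (rule image_cong[OF refl])
        fix z assume "z \<in> set_hop hop C D"
        thus "g (hcoset hop z A) = pbar T (f z)" using geq ZB by blast
      qed
      have ptw: "x \<in> (\<lambda>z. pbar T (f z)) ` set_hop hop C D \<longleftrightarrow> x \<in> scheme_hop (Sq T) (g C) (g D)" for x
      proof (cases "x \<in> Sq T")
        case True
        then obtain r where r: "r \<in> S" "x = pbar T r" using Sq_def[OF L] by auto
        have "x \<in> scheme_hop (Sq T) (g C) (g D) \<longleftrightarrow> (\<exists>s\<in>Z. pbar T s = pbar T r)"
          using quot_hop[OF L fbc r(1) ZS ZU] geq bc r by simp
        also have "\<dots> \<longleftrightarrow> x \<in> (\<lambda>z. pbar T (f z)) ` set_hop hop C D" unfolding Z_def r by blast
        finally show ?thesis by simp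
      next
        case False
        have "(\<lambda>z. pbar T (f z)) ` set_hop hop C D \<subseteq> Sq T" using ZB fB pbar_S[OF L] by blast
        moreover have "scheme_hop (Sq T) (g C) (g D) \<subseteq> Sq T" unfolding scheme_hop_def by blast
        ultimately show ?thesis using False by blast
      qed
      show "g ` quot_hop A hop C D = scheme_hop (Sq T) (g C) (g D)" unfolding gl by (rule set_eqI) (rule ptw)
    qed
    have "Xq T \<subseteq> X" using Xq_sub[OF L] .
    have "hg_iso (quot_carrier B A hop) (quot_hop A hop) (Sq T) (scheme_hop (Sq T))"
      unfolding hg_iso_def using bijg homg by blast
    thus ?thesis unfolding finitely_realizable_def using finQ schQ by blast
  qed
  show ?thesis using part1 part2 by simp
qed


end
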